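(* Let $\Gamma$ be a finite group and let $f:Y\to X$ be a $\Gamma$-covering of finite graphs. Then there exist a map $\alpha:\mathbb{E}_X\to\Gamma$ with $\alpha(\bar e)=\alpha(e)^{-1}$ for all $e\in\mathbb{E}_X$, and a family $\mathcal{I}=(I_v)_{v\in V_X}$ of subgroups of $\Gamma$, such that $Y$ is isomorphic to the derived graph $X(\Gamma,\mathcal{I})$ as $\Gamma$-coverings of $X$. That is, there is a $\Gamma$-equivariant isomorphism of graphs $Y\cong X(\Gamma,\mathcal{I})$ compatible with the maps to $X$.
   Context: A finite graph $X$ consists of a finite vertex set $V_X$, a finite edge set $\mathbb{E}_X$, a fixed-point-free involution $e\mapsto\bar e$ on $\mathbb{E}_X$, and maps $s,t:\mathbb{E}_X\to V_X$ with $s(\bar e)=t(e)$ and $t(\bar e)=s(e)$; multi-edges and loops are allowed. A morphism $f:Y\to X$ is a pair $f_V:V_Y\to V_X$, $f_{\mathbb{E}}:\mathbb{E}_Y\to\mathbb{E}_X$ with $f_V(s(e))=s(f_{\mathbb{E}}(e))$, $f_V(t(e))=t(f_{\mathbb{E}}(e))$ and $f_{\mathbb{E}}(\bar e)=\overline{f_{\mathbb{E}}(e)}$. A $\Gamma$-covering is a morphism $f:Y\to X$ with an action of $\Gamma$ on $Y$ (by graph automorphisms) preserving $f$, such that $\Gamma$ acts transitively on each vertex fibre $f_V^{-1}(v)$ and freely and transitively on each edge fibre $f_{\mathbb{E}}^{-1}(e)$. Given $(X,\Gamma,\alpha,\mathcal{I})$ as in the claim with $\Gamma$ finite, the derived graph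 $X(\Gamma,\mathcal{I})$ is defined as follows. Its vertex set is $\coprod_{v\in V_X}(\Gamma/I_v\times\{v\})$ and its edge set is $\Gamma\times\mathbb{E}_X$. For an edge $(\gamma,e)$ we set $s((\gamma,e))=(\gamma I_{s(e)},s(e))$, $t((\gamma,e))=(\gamma\alpha(e)I_{t(e)},t(e))$ and $\overline{(\gamma,e)}=(\gamma\alpha(e),\bar e)$. The group $\Gamma$ acts by left multiplication on first components, and projection to second components gives a $\Gamma$-covering $X(\Gamma,\mathcal{I})\to X$. *)

theory Defs
  imports "HOL-Algebra.Algebra"
begin

text \<open>Finite graphs in Serre's sense: vertex set, edge set, fixed-point-free
involution on gedges (reversal), source and target maps.\<close>

record ('v, 'e) graph =
  gverts :: "'v set"
  gedges :: "'e set"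
  grev   :: "'e \<Rightarrow> 'e"
  gsrc   :: "'e \<Rightarrow> 'v"
  gtgt   :: "'e \<Rightarrow> 'v"

definition is_graph :: "('v, 'e) graph \<Rightarrow> bool" where
  "is_graph B \<longleftrightarrow>
     (\<forall>e\<in>gedges B. grev B e \<in> gedges B \<and> grev B e \<noteq> e \<and> grev B (grev B e) = e
        \<and> gsrc B e \<in> gverts B \<and> gtgt B e \<in> gverts B
        \<and> gsrc B (grev B e) = gtgt B e \<and> gtgt B (grev B e) = gsrc B e)"

definition finite_graph :: "('v, 'e) graph \<Rightarrow> bool" where
  "finite_graph B \<longleftrightarrow> is_graph B \<and> finite (gverts B) \<and> finite (gedges B)"

definition graph_hom ::
  "('v, 'e) graph \<Rightarrow> ('w, 'd) graph \<Rightarrow> ('v \<Rightarrow> 'w) \<Rightarrow> ('e \<Rightarrow> 'd) \<Rightarrow> bool" where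
  "graph_hom Y B fV fE \<longleftrightarrow>
     (\<forall>v\<in>gverts Y. fV v \<in> gverts B) \<and> (\<forall>e\<in>gedges Y. fE e \<in> gedges B) \<and>
     (\<forall>e\<in>gedges Y. fV (gsrc Y e) = gsrc B (fE e) \<and> fV (gtgt Y e) = gtgt B (fE e)
                   \<and> fE (grev Y e) = grev B (fE e))"

definition graph_iso ::
  "('v, 'e) graph \<Rightarrow> ('w, 'd) graph \<Rightarrow> ('v \<Rightarrow> 'w) \<Rightarrow> ('e \<Rightarrow> 'd) \<Rightarrow> bool" where
  "graph_iso Y B fV fE \<longleftrightarrow> graph_hom Y B fV fE \<and>
     bij_betw fV (gverts Y) (gverts B) \<and> bij_betw fE (gedges Y) (gedges B)"

definition graph_action ::
  "('g, 'm) monoid_scheme \<Rightarrow> ('v, 'e) graph \<Rightarrow> ('g \<Rightarrow> 'v \<Rightarrow> 'v) \<Rightarrow> ('g \<Rightarrow> 'e \<Rightarrow> 'e) \<Rightarrow> bool" where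
  "graph_action G Y aV aE \<longleftrightarrow>
     (\<forall>g\<in>carrier G. graph_iso Y Y (aV g) (aE g)) \<and>
     (\<forall>v\<in>gverts Y. aV \<one>\<^bsub>G\<^esub> v = v) \<and> (\<forall>e\<in>gedges Y. aE \<one>\<^bsub>G\<^esub> e = e) \<and>
     (\<forall>g\<in>carrier G. \<forall>h\<in>carrier G.
        (\<forall>v\<in>gverts Y. aV (g \<otimes>\<^bsub>G\<^esub> h) v = aV g (aV h v)) \<and>
        (\<forall>e\<in>gedges Y. aE (g \<otimes>\<^bsub>G\<^esub> h) e = aE g (aE h e)))"

text \<open>A G-covering f : Y \<rightarrow> B (transitive actions are taken on nonempty sets,
so fibres over vertices are nonempty).\<close>
definition covering ::
  "('g, 'm) monoid_scheme \<Rightarrow> ('v, 'e) graph \<Rightarrow> ('w, 'd) graph \<Rightarrow>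
   ('g \<Rightarrow> 'v \<Rightarrow> 'v) \<Rightarrow> ('g \<Rightarrow> 'e \<Rightarrow> 'e) \<Rightarrow> ('v \<Rightarrow> 'w) \<Rightarrow> ('e \<Rightarrow> 'd) \<Rightarrow> bool" where
  "covering G Y B aV aE fV fE \<longleftrightarrow>
     graph_hom Y B fV fE \<and> graph_action G Y aV aE \<and>
     (\<forall>g\<in>carrier G. (\<forall>v\<in>gverts Y. fV (aV g v) = fV v) \<and> (\<forall>e\<in>gedges Y. fE (aE g e) = fE e)) \<and>
     (\<forall>x\<in>gverts B. (\<exists>v\<in>gverts Y. fV v = x) \<and>
        (\<forall>v\<in>gverts Y. \<forall>w\<in>gverts Y. fV v = x \<longrightarrow> fV w = x \<longrightarrow> (\<exists>g\<in>carrier G. aV g v = w))) \<and>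
     (\<forall>x\<in>gedges B. (\<exists>e\<in>gedges Y. fE e = x) \<and>
        (\<forall>e\<in>gedges Y. \<forall>d\<in>gedges Y. fE e = x \<longrightarrow> fE d = x \<longrightarrow> (\<exists>!g. g \<in> carrier G \<and> aE g e = d)))"

definition derived_graph ::
  "('g, 'm) monoid_scheme \<Rightarrow> ('w, 'd) graph \<Rightarrow> ('d \<Rightarrow> 'g) \<Rightarrow> ('w \<Rightarrow> 'g set) \<Rightarrow>
   ('g set \<times> 'w, 'g \<times> 'd) graph" where
  "derived_graph G B \<alpha> I =
     \<lparr> gverts = {(g <#\<^bsub>G\<^esub> I v, v) | g v. g \<in> carrier G \<and> v \<in> gverts B},
       gedges = carrier G \<times> gedges B,
       grev = (\<lambda>(g, e). (g \<otimes>\<^bsub>G\<^esub> \<alpha> e, grev B e)),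
       gsrc = (\<lambda>(g, e). (g <#\<^bsub>G\<^esub> I (gsrc B e), gsrc B e)),
       gtgt = (\<lambda>(g, e). ((g \<otimes>\<^bsub>G\<^esub> \<alpha> e) <#\<^bsub>G\<^esub> I (gtgt B e), gtgt B e)) \<rparr>"

definition derived_actV :: "('g, 'm) monoid_scheme \<Rightarrow> 'g \<Rightarrow> 'g set \<times> 'w \<Rightarrow> 'g set \<times> 'w" where
  "derived_actV G h = (\<lambda>(C, v). (h <#\<^bsub>G\<^esub> C, v))"

definition derived_actE :: "('g, 'm) monoid_scheme \<Rightarrow> 'g \<Rightarrow> 'g \<times> 'd \<Rightarrow> 'g \<times> 'd" where
  "derived_actE G h = (\<lambda>(g, e). (h \<otimes>\<^bsub>G\<^esub> g, e))"

end

theory Submission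
  imports Defs
begin

locale cov = group G for G :: "('g, 'm) monoid_scheme" (structure) +
  fixes Y :: "('v, 'e) graph" and B :: "('w, 'd) graph"
    and aV :: "'g \<Rightarrow> 'v \<Rightarrow> 'v" and aE :: "'g \<Rightarrow> 'e \<Rightarrow> 'e"
    and fV :: "'v \<Rightarrow> 'w" and fE :: "'e \<Rightarrow> 'd"
  assumes gY: "is_graph Y" and gB: "is_graph B"
    and cv: "covering G Y B aV aE fV fE"
begin

lemmas cvu = cv[unfolded covering_def]
lemmas c3 = cvu[THEN conjunct2, THEN conjunct2, THEN conjunct1]
lemmas c4 = cvu[THEN conjunct2, THEN conjunct2, THEN conjunct2, THEN conjunct1]
lemmas c5 = cvu[THEN conjunct2, THEN conjunct2, THEN conjunct2, THEN conjunct2]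
lemmas hom = cvu[THEN conjunct1]
lemmas act = cvu[THEN conjunct2, THEN conjunct1]
lemmas actu = act[unfolded graph_action_def]
lemmas a1 = actu[THEN conjunct1]
lemmas a2 = actu[THEN conjunct2, THEN conjunct1]
lemmas a3 = actu[THEN conjunct2, THEN conjunct2, THEN conjunct1]
lemmas a4 = actu[THEN conjunct2, THEN conjunct2, THEN conjunct2]

lemma fV_in: "v \<in> gverts Y \<Longrightarrow> fV v \<in> gverts B" using hom unfolding graph_hom_def by blast
lemma fE_in: "e \<in> gedges Y \<Longrightarrow> fE e \<in> gedges B" using hom unfolding graph_hom_def by blast
lemma fE_src: "e \<in> gedges Y \<Longrightarrow> fV (gsrc Y e) = gsrc B (fE e)" using hom unfolding graph_hom_def by blast
lemma fE_tgt: "e \<in> gedges Y \<Longrightarrow> fV (gtgt Y e) = gtgt B (fE e)" using hom unfolding graph_hom_def by blast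
lemma fE_rev: "e \<in> gedges Y \<Longrightarrow> fE (grev Y e) = grev B (fE e)" using hom unfolding graph_hom_def by blast

lemma aiso: "g \<in> carrier G \<Longrightarrow> graph_hom Y Y (aV g) (aE g)"
  using a1 unfolding graph_iso_def by blast
lemma aV_in: "g \<in> carrier G \<Longrightarrow> v \<in> gverts Y \<Longrightarrow> aV g v \<in> gverts Y"
  using aiso unfolding graph_hom_def by blast
lemma aE_in: "g \<in> carrier G \<Longrightarrow> e \<in> gedges Y \<Longrightarrow> aE g e \<in> gedges Y"
  using aiso unfolding graph_hom_def by blast
lemma aE_src: "g \<in> carrier G \<Longrightarrow> e \<in> gedges Y \<Longrightarrow> gsrc Y (aE g e) = aV g (gsrc Y e)"
  using aiso unfolding graph_hom_def by metis
lemma aE_tgt: "g \<in> carrier G \<Longrightarrow> e \<in> gedges Y \<Longrightarrow> gtgt Y (aE g e) = aV g (gtgt Y e)"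
  using aiso unfolding graph_hom_def by metis
lemma aE_rev: "g \<in> carrier G \<Longrightarrow> e \<in> gedges Y \<Longrightarrow> grev Y (aE g e) = aE g (grev Y e)"
  using aiso unfolding graph_hom_def by metis
lemma aV_one: "v \<in> gverts Y \<Longrightarrow> aV \<one> v = v" using a2 by blast
lemma aE_one: "e \<in> gedges Y \<Longrightarrow> aE \<one> e = e" using a3 by blast
lemma aV_mult: "g \<in> carrier G \<Longrightarrow> h \<in> carrier G \<Longrightarrow> v \<in> gverts Y \<Longrightarrow> aV (g \<otimes> h) v = aV g (aV h v)"
  using a4 by blast
lemma aE_mult: "g \<in> carrier G \<Longrightarrow> h \<in> carrier G \<Longrightarrow> e \<in> gedges Y \<Longrightarrow> aE (g \<otimes> h) e = aE g (aE h e)"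
  using a4 by blast
lemma fV_inv: "g \<in> carrier G \<Longrightarrow> v \<in> gverts Y \<Longrightarrow> fV (aV g v) = fV v"
  using c3 by blast
lemma fE_inv: "g \<in> carrier G \<Longrightarrow> e \<in> gedges Y \<Longrightarrow> fE (aE g e) = fE e"
  using c3 by blast
lemma vfib_ex: "x \<in> gverts B \<Longrightarrow> \<exists>v\<in>gverts Y. fV v = x"
  by (rule bspec[OF c4, THEN conjunct1])
lemma vfib_tr: "v \<in> gverts Y \<Longrightarrow> w \<in> gverts Y \<Longrightarrow> fV v = fV w \<Longrightarrow> \<exists>g\<in>carrier G. aV g v = w"
proof -
  assume a: "v \<in> gverts Y" "w \<in> gverts Y" "fV v = fV w"
  have x: "fV v \<in> gverts B" using fV_in a by blast
  from bspec[OF c4 x] have "\<forall>v'\<in>gverts Y. \<forall>w'\<in>gverts Y. fV v' = fV v \<longrightarrow> fV w' = fV v \<longrightarrow> (\<exists>g\<in>carrier G. aV g v' = w')"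
    by (rule conjunct2)
  then have "fV w = fV v \<longrightarrow> (\<exists>g\<in>carrier G. aV g v = w)" using a(1) a(2) by blast
  then show ?thesis using a(3) by simp
qed
lemma efib_ex: "x \<in> gedges B \<Longrightarrow> \<exists>e\<in>gedges Y. fE e = x"
  by (rule bspec[OF c5, THEN conjunct1])
lemma efib_un: "e \<in> gedges Y \<Longrightarrow> d \<in> gedges Y \<Longrightarrow> fE e = fE d \<Longrightarrow> \<exists>!g. g \<in> carrier G \<and> aE g e = d"
proof -
  assume a: "e \<in> gedges Y" "d \<in> gedges Y" "fE e = fE d"
  have x: "fE e \<in> gedges B" using fE_in a by blast
  from bspec[OF c5 x] have "\<forall>e'\<in>gedges Y. \<forall>d'\<in>gedges Y. fE e' = fE e \<longrightarrow> fE d' = fE e \<longrightarrow> (\<exists>!g. g \<in> carrier G \<and> aE g e' = d')"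
    by (rule conjunct2)
  then have "fE d = fE e \<longrightarrow> (\<exists>!g. g \<in> carrier G \<and> aE g e = d)" using a(1) a(2) by blast
  then show ?thesis using a(3) by simp
qed

lemma Y_rev: "e \<in> gedges Y \<Longrightarrow> grev Y e \<in> gedges Y \<and> grev Y (grev Y e) = e"
  using gY unfolding is_graph_def by blast
lemma Y_st: "e \<in> gedges Y \<Longrightarrow> gsrc Y e \<in> gverts Y \<and> gtgt Y e \<in> gverts Y
   \<and> gsrc Y (grev Y e) = gtgt Y e \<and> gtgt Y (grev Y e) = gsrc Y e"
  using gY unfolding is_graph_def by blast
lemma B_rev: "e \<in> gedges B \<Longrightarrow> grev B e \<in> gedges B \<and> grev B (grev B e) = e \<and> grev B e \<noteq> e"
  using gB unfolding is_graph_def by blast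
lemma B_st: "e \<in> gedges B \<Longrightarrow> gsrc B e \<in> gverts B \<and> gtgt B e \<in> gverts B
   \<and> gsrc B (grev B e) = gtgt B e \<and> gtgt B (grev B e) = gsrc B e"
  using gB unfolding is_graph_def by blast

lemma aV_inv: "g \<in> carrier G \<Longrightarrow> v \<in> gverts Y \<Longrightarrow> aV (inv g) (aV g v) = v"
  by (metis aV_mult aV_one inv_closed l_inv)
lemma aE_inv: "g \<in> carrier G \<Longrightarrow> e \<in> gedges Y \<Longrightarrow> aE (inv g) (aE g e) = e"
  by (metis aE_mult aE_one inv_closed l_inv)

definition "vt x = (SOME v. v \<in> gverts Y \<and> fV v = x)"
definition "I x = {h \<in> carrier G. aV h (vt x) = vt x}"
definition "Fib v = {h \<in> carrier G. aV h (vt (fV v)) = v}"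
definition "rep e = (SOME e'. e' \<in> {e, grev B e})"
definition "L0 e = (SOME y. y \<in> gedges Y \<and> fE y = e \<and> gsrc Y y = vt (gsrc B e))"
definition "a0 e = (SOME a. a \<in> carrier G \<and> aV a (vt (gtgt B e)) = gtgt Y (L0 e))"
definition "al e = (if rep e = e then a0 e else inv (a0 (grev B e)))"
definition "L e = (if rep e = e then L0 e else aE (inv (a0 (grev B e))) (grev Y (L0 (grev B e))))"
definition "phV v = (Fib v, fV v)"
definition "phE y = ((THE g. g \<in> carrier G \<and> aE g (L (fE y)) = y), fE y)"

lemma vt: "x \<in> gverts B \<Longrightarrow> vt x \<in> gverts Y \<and> fV (vt x) = x"
  unfolding vt_def using vfib_ex by (metis (mono_tags, lifting) someI_ex)

lemma I_sub: "x \<in> gverts B \<Longrightarrow> subgroup (I x) G"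
proof -
  assume x: "x \<in> gverts B"
  then have v: "vt x \<in> gverts Y" using vt by blast
  show ?thesis
  proof (rule subgroupI)
    show "I x \<subseteq> carrier G" unfolding I_def by blast
    show "I x \<noteq> {}" using v aV_one unfolding I_def by auto
    fix a b assume "a \<in> I x" "b \<in> I x"
    then show "inv a \<in> I x" "a \<otimes> b \<in> I x" using v unfolding I_def
      by (auto simp: aV_mult) (metis aV_inv)
  qed
qed

lemma Fib_eq: assumes v: "v \<in> gverts Y" and g: "g \<in> carrier G" and e: "aV g (vt (fV v)) = v"
  shows "Fib v = g <# I (fV v)"
proof -
  let ?x = "fV v"
  have x: "?x \<in> gverts B" using fV_in v by blast
  have w: "vt ?x \<in> gverts Y" using vt x by blast
  show ?thesis
  proof (rule Set.set_eqI, rule iffI)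
    fix h assume "h \<in> Fib v"
    then have h: "h \<in> carrier G" "aV h (vt ?x) = v" unfolding Fib_def by auto
    have "aV (inv g) v = vt ?x" using aV_inv[OF g w] e by simp
    then have "inv g \<otimes> h \<in> I ?x" unfolding I_def using h g e w
      by (auto simp: aV_mult)
    moreover have "h = g \<otimes> (inv g \<otimes> h)" using g h by (simp add: m_assoc[symmetric])
    ultimately show "h \<in> g <# I ?x" unfolding l_coset_def by blast
  next
    fix h assume "h \<in> g <# I ?x"
    then obtain k where k: "k \<in> I ?x" "h = g \<otimes> k" unfolding l_coset_def by blast
    then show "h \<in> Fib v" unfolding Fib_def I_def using g e w by (auto simp: aV_mult)
  qed
qed

lemma rep: "rep e \<in> {e, grev B e}" unfolding rep_def by (rule someI[of _ e]) simp
lemma rep_rev: "e \<in> gedges B \<Longrightarrow> rep (grev B e) = rep e"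
  unfolding rep_def using B_rev by (metis insert_commute)

lemma L0: assumes e: "e \<in> gedges B"
  shows "L0 e \<in> gedges Y \<and> fE (L0 e) = e \<and> gsrc Y (L0 e) = vt (gsrc B e)"
proof -
  obtain y where y: "y \<in> gedges Y" "fE y = e" using efib_ex e by blast
  have s: "gsrc B e \<in> gverts B" using B_st e by blast
  have "gsrc Y y \<in> gverts Y" using Y_st y by blast
  moreover have "fV (gsrc Y y) = fV (vt (gsrc B e))" using fE_src y vt s by simp
  ultimately obtain g where g: "g \<in> carrier G" "aV g (gsrc Y y) = vt (gsrc B e)"
    using vfib_tr vt s by blast
  have "aE g y \<in> gedges Y \<and> fE (aE g y) = e \<and> gsrc Y (aE g y) = vt (gsrc B e)"
    using g y aE_in fE_inv aE_src by auto
  then show ?thesis unfolding L0_def by (rule someI)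
qed

lemma a0: assumes e: "e \<in> gedges B"
  shows "a0 e \<in> carrier G \<and> aV (a0 e) (vt (gtgt B e)) = gtgt Y (L0 e)"
proof -
  have t: "gtgt B e \<in> gverts B" using B_st e by blast
  have "gtgt Y (L0 e) \<in> gverts Y" using Y_st L0 e by blast
  moreover have "fV (gtgt Y (L0 e)) = fV (vt (gtgt B e))" using fE_tgt L0 e vt t by simp
  ultimately obtain g where "g \<in> carrier G" "aV g (vt (gtgt B e)) = gtgt Y (L0 e)"
    using vfib_tr vt t by metis
  then show ?thesis unfolding a0_def by (metis (mono_tags, lifting) someI)
qed

lemma al: assumes e: "e \<in> gedges B"
  shows "al e \<in> carrier G \<and> al (grev B e) = inv (al e)"
proof (cases "rep e = e")
  case True
  have "rep (grev B e) \<noteq> grev B e" using True rep_rev[OF e] B_rev[OF e] by auto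
  then show ?thesis using True a0[OF e] B_rev[OF e] unfolding al_def by simp
next
  case False
  then have r: "rep e = grev B e" using rep by blast
  then have "rep (grev B e) = grev B e" using rep_rev e by simp
  then show ?thesis using False a0 e B_rev unfolding al_def by simp
qed

lemma L: assumes e: "e \<in> gedges B"
  shows "L e \<in> gedges Y \<and> fE (L e) = e \<and> gsrc Y (L e) = vt (gsrc B e)
    \<and> gtgt Y (L e) = aV (al e) (vt (gtgt B e)) \<and> grev Y (L e) = aE (al e) (L (grev B e))"
proof (cases "rep e = e")
  case True
  have nr: "rep (grev B e) \<noteq> grev B e" using True rep_rev[OF e] B_rev[OF e] by auto
  have 1: "L e = L0 e" "al e = a0 e" using True unfolding L_def al_def by auto
  have 2: "L (grev B e) = aE (inv (a0 e)) (grev Y (L0 e))"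
    using nr B_rev e unfolding L_def by simp
  have a: "a0 e \<in> carrier G" using a0 e by blast
  have "grev Y (L0 e) \<in> gedges Y" using Y_rev L0 e by blast
  then have "aE (a0 e) (L (grev B e)) = grev Y (L0 e)" unfolding 2
    by (metis a aE_mult aE_one inv_closed r_inv)
  then show ?thesis using 1 L0 e a0 by simp
next
  case False
  then have r: "rep e = grev B e" using rep by blast
  then have r2: "rep (grev B e) = grev B e" using rep_rev e by simp
  let ?d = "grev B e"
  have d: "?d \<in> gedges B" "grev B ?d = e" using B_rev e by auto
  have 1: "L e = aE (inv (a0 ?d)) (grev Y (L0 ?d))" "al e = inv (a0 ?d)"
    using False unfolding L_def al_def by auto
  have 2: "L ?d = L0 ?d" using r2 unfolding L_def by simp
  have a: "a0 ?d \<in> carrier G" "aV (a0 ?d) (vt (gtgt B ?d)) = gtgt Y (L0 ?d)" using a0 d by auto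
  have l0: "L0 ?d \<in> gedges Y" "fE (L0 ?d) = ?d" "gsrc Y (L0 ?d) = vt (gsrc B ?d)" using L0 d by auto
  have rv: "grev Y (L0 ?d) \<in> gedges Y" "grev Y (grev Y (L0 ?d)) = L0 ?d" using Y_rev l0 by auto
  have st: "gsrc Y (grev Y (L0 ?d)) = gtgt Y (L0 ?d)" "gtgt Y (grev Y (L0 ?d)) = gsrc Y (L0 ?d)"
    using Y_st l0 by auto
  have tv: "vt (gtgt B ?d) \<in> gverts Y" using vt B_st d by blast
  have s4: "L e \<in> gedges Y" using 1 aE_in a rv by simp
  have s5: "fE (L e) = e" using 1 fE_inv a rv fE_rev l0 d by simp
  have ig: "inv (a0 ?d) \<in> carrier G" using a by simp
  have bs: "gtgt B ?d = gsrc B e" "gsrc B ?d = gtgt B e" using B_st e by auto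
  have "gsrc Y (L e) = aV (inv (a0 ?d)) (gsrc Y (grev Y (L0 ?d)))"
    unfolding 1 using aE_src[OF ig rv(1)] .
  also have "\<dots> = aV (inv (a0 ?d)) (aV (a0 ?d) (vt (gtgt B ?d)))" using st a by simp
  also have "\<dots> = vt (gsrc B e)" using aV_inv[OF a(1) tv] bs by simp
  finally have s1: "gsrc Y (L e) = vt (gsrc B e)" .
  have "gtgt Y (L e) = aV (inv (a0 ?d)) (gtgt Y (grev Y (L0 ?d)))"
    unfolding 1 using aE_tgt[OF ig rv(1)] .
  also have "\<dots> = aV (al e) (vt (gtgt B e))" using st l0 bs 1 by simp
  finally have s2: "gtgt Y (L e) = aV (al e) (vt (gtgt B e))" .
  have "grev Y (L e) = aE (inv (a0 ?d)) (grev Y (grev Y (L0 ?d)))"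
    unfolding 1 using aE_rev[OF ig rv(1)] by simp
  also have "\<dots> = aE (al e) (L (grev B e))" using rv 1 2 by simp
  finally have s3: "grev Y (L e) = aE (al e) (L (grev B e))" .
  show ?thesis by (intro conjI s4 s5 s1 s2 s3)
qed

lemma Fib_any: "v \<in> gverts Y \<Longrightarrow> \<exists>g\<in>carrier G. aV g (vt (fV v)) = v"
proof -
  assume v: "v \<in> gverts Y"
  have x: "fV v \<in> gverts B" using fV_in v .
  show ?thesis using vfib_tr[of "vt (fV v)" v] vt[OF x] v by simp
qed

lemma phE_ex: "y \<in> gedges Y \<Longrightarrow> \<exists>g\<in>carrier G. aE g (L (fE y)) = y"
proof -
  assume y: "y \<in> gedges Y"
  have x: "fE y \<in> gedges B" using fE_in y .
  show ?thesis using efib_un[of "L (fE y)" y] L[OF x] y by blast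
qed

lemma phE_char: assumes y: "y \<in> gedges Y" and g: "g \<in> carrier G" and e: "aE g (L (fE y)) = y"
  shows "phE y = (g, fE y)"
proof -
  have "L (fE y) \<in> gedges Y" "fE (L (fE y)) = fE y" using L fE_in y by auto
  then have u: "\<exists>!g. g \<in> carrier G \<and> aE g (L (fE y)) = y" using efib_un y by metis
  have "(THE g. g \<in> carrier G \<and> aE g (L (fE y)) = y) = g"
    by (rule the1_equality[OF u]) (use g e in blast)
  then show ?thesis unfolding phE_def by simp
qed

lemma phV_char: assumes v: "v \<in> gverts Y" and g: "g \<in> carrier G" and e: "aV g (vt (fV v)) = v"
  shows "phV v = (g <# I (fV v), fV v)"
  using Fib_eq[OF v g e] unfolding phV_def by simp

lemma edge_facts: assumes y: "y \<in> gedges Y" and g: "g \<in> carrier G" and ey: "aE g (L (fE y)) = y"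
  shows "phV (gsrc Y y) = (g <# I (gsrc B (fE y)), gsrc B (fE y))"
    and "phV (gtgt Y y) = ((g \<otimes> al (fE y)) <# I (gtgt B (fE y)), gtgt B (fE y))"
    and "phE (grev Y y) = (g \<otimes> al (fE y), grev B (fE y))"
proof -
  let ?e = "fE y"
  have e: "?e \<in> gedges B" using fE_in y by blast
  note Le = L[OF e]
  have st: "gsrc B ?e \<in> gverts B" "gtgt B ?e \<in> gverts B" using B_st e by auto
  have a: "al ?e \<in> carrier G" using al e by blast
  have Li: "L ?e \<in> gedges Y" using Le by blast
  have gm: "g \<otimes> al ?e \<in> carrier G" using g a by simp
  have q1: "gsrc Y y = aV g (vt (gsrc B ?e))" using ey[symmetric] aE_src[OF g Li] Le by simp
  have f1: "fV (gsrc Y y) = gsrc B ?e" using fE_src y by simp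
  have m1: "gsrc Y y \<in> gverts Y" using Y_st y by blast
  have "aV g (vt (fV (gsrc Y y))) = gsrc Y y" using q1 f1 by simp
  from phV_char[OF m1 g this] f1
  show "phV (gsrc Y y) = (g <# I (gsrc B (fE y)), gsrc B (fE y))" by simp
  have q2: "gtgt Y y = aV (g \<otimes> al ?e) (vt (gtgt B ?e))"
    using ey[symmetric] aE_tgt[OF g Li] Le aV_mult[OF g a] vt st by simp
  have f2: "fV (gtgt Y y) = gtgt B ?e" using fE_tgt y by simp
  have m2: "gtgt Y y \<in> gverts Y" using Y_st y by blast
  have "aV (g \<otimes> al ?e) (vt (fV (gtgt Y y))) = gtgt Y y" using q2 f2 by simp
  from phV_char[OF m2 gm this] f2
  show "phV (gtgt Y y) = ((g \<otimes> al (fE y)) <# I (gtgt B (fE y)), gtgt B (fE y))" by simp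
  have d: "grev B ?e \<in> gedges B" using B_rev e by blast
  have q3: "grev Y y = aE (g \<otimes> al ?e) (L (grev B ?e))"
    using ey[symmetric] aE_rev[OF g Li] Le aE_mult[OF g a] L[OF d] by simp
  have f3: "fE (grev Y y) = grev B ?e" using fE_rev y by simp
  have m3: "grev Y y \<in> gedges Y" using Y_rev y by blast
  have "aE (g \<otimes> al ?e) (L (fE (grev Y y))) = grev Y y" using q3 f3 by simp
  from phE_char[OF m3 gm this] f3
  show "phE (grev Y y) = (g \<otimes> al (fE y), grev B (fE y))" by simp
qed

lemma hom_D: "graph_hom Y (derived_graph G B al I) phV phE"
  unfolding graph_hom_def
proof (intro conjI ballI)
  fix v assume v: "v \<in> gverts Y"
  obtain g where g: "g \<in> carrier G" "aV g (vt (fV v)) = v" using Fib_any v by blast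
  show "phV v \<in> gverts (derived_graph G B al I)"
    unfolding derived_graph_def using phV_char[OF v g] g fV_in v by auto
next
  fix y assume y: "y \<in> gedges Y"
  obtain g where g: "g \<in> carrier G" "aE g (L (fE y)) = y" using phE_ex y by blast
  note ef = edge_facts[OF y g] phE_char[OF y g]
  show "phE y \<in> gedges (derived_graph G B al I)"
    unfolding derived_graph_def using ef g fE_in y by auto
  show "phV (gsrc Y y) = gsrc (derived_graph G B al I) (phE y)"
    unfolding derived_graph_def using ef by auto
  show "phV (gtgt Y y) = gtgt (derived_graph G B al I) (phE y)"
    unfolding derived_graph_def using ef by auto
  show "phE (grev Y y) = grev (derived_graph G B al I) (phE y)"
    unfolding derived_graph_def using ef by auto
qed

lemma bijV: "bij_betw phV (gverts Y) (gverts (derived_graph G B al I))"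
proof (rule bij_betw_imageI)
  show "inj_on phV (gverts Y)"
  proof (rule inj_onI)
    fix v w assume v: "v \<in> gverts Y" and w: "w \<in> gverts Y" and eq: "phV v = phV w"
    obtain g where g: "g \<in> carrier G" "aV g (vt (fV v)) = v" using Fib_any v by blast
    have f: "fV v = fV w" "Fib v = Fib w" using eq unfolding phV_def by auto
    have "g \<in> Fib v" unfolding Fib_def using g by blast
    then have "g \<in> Fib w" using f by simp
    then have "aV g (vt (fV w)) = w" unfolding Fib_def by blast
    then show "v = w" using g f by simp
  qed
  show "phV ` gverts Y = gverts (derived_graph G B al I)"
  proof
    show "phV ` gverts Y \<subseteq> gverts (derived_graph G B al I)"
    proof (rule image_subsetI)
      fix v assume "v \<in> gverts Y"
      then show "phV v \<in> gverts (derived_graph G B al I)"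
        using hom_D unfolding graph_hom_def by blast
    qed
    show "gverts (derived_graph G B al I) \<subseteq> phV ` gverts Y"
    proof
      fix p assume "p \<in> gverts (derived_graph G B al I)"
      then obtain g x where p: "p = (g <# I x, x)" "g \<in> carrier G" "x \<in> gverts B"
        unfolding derived_graph_def by auto
      let ?v = "aV g (vt x)"
      have vp: "vt x \<in> gverts Y" "fV (vt x) = x" using vt[OF p(3)] by blast+
      have v: "?v \<in> gverts Y" "fV ?v = x" using aV_in[OF p(2) vp(1)] fV_inv[OF p(2) vp(1)] vp(2) by auto
      then have "phV ?v = p" using phV_char[OF v(1) p(2)] p by simp
      then show "p \<in> phV ` gverts Y" using v by blast
    qed
  qed
qed

lemma bijE: "bij_betw phE (gedges Y) (gedges (derived_graph G B al I))"
proof (rule bij_betw_imageI)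
  show "inj_on phE (gedges Y)"
  proof (rule inj_onI)
    fix y z assume y: "y \<in> gedges Y" and z: "z \<in> gedges Y" and eq: "phE y = phE z"
    obtain g where g: "g \<in> carrier G" "aE g (L (fE y)) = y" using phE_ex y by blast
    obtain h where h: "h \<in> carrier G" "aE h (L (fE z)) = z" using phE_ex z by blast
    have "(g, fE y) = (h, fE z)" using eq phE_char[OF y g] phE_char[OF z h] by simp
    then have "g = h" "fE y = fE z" by auto
    then show "y = z" using g(2) h(2) by metis
  qed
  show "phE ` gedges Y = gedges (derived_graph G B al I)"
  proof
    show "phE ` gedges Y \<subseteq> gedges (derived_graph G B al I)"
    proof (rule image_subsetI)
      fix v assume "v \<in> gedges Y"
      then show "phE v \<in> gedges (derived_graph G B al I)"
        using hom_D unfolding graph_hom_def by blast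
    qed
    show "gedges (derived_graph G B al I) \<subseteq> phE ` gedges Y"
    proof
      fix p assume "p \<in> gedges (derived_graph G B al I)"
      then obtain g e where p: "p = (g, e)" "g \<in> carrier G" "e \<in> gedges B"
        unfolding derived_graph_def by auto
      let ?y = "aE g (L e)"
      have Lp: "L e \<in> gedges Y" "fE (L e) = e" using L[OF p(3)] by blast+
      have y: "?y \<in> gedges Y" "fE ?y = e" using aE_in[OF p(2) Lp(1)] fE_inv[OF p(2) Lp(1)] Lp(2) by auto
      then have "phE ?y = p" using phE_char[OF y(1) p(2)] p by simp
      then show "p \<in> phE ` gedges Y" using y by blast
    qed
  qed
qed

lemma equivV: assumes h: "h \<in> carrier G" and v: "v \<in> gverts Y"
  shows "phV (aV h v) = derived_actV G h (phV v)"
proof -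
  obtain g where g: "g \<in> carrier G" "aV g (vt (fV v)) = v" using Fib_any v by blast
  have x: "fV v \<in> gverts B" using fV_in v by blast
  have w: "vt (fV v) \<in> gverts Y" using vt x by blast
  have hv: "aV h v \<in> gverts Y" "fV (aV h v) = fV v" using aV_in fV_inv h v by auto
  have "aV (h \<otimes> g) (vt (fV (aV h v))) = aV h v" using hv(2) g(2) aV_mult[OF h g(1) w] by simp
  then have 1: "phV (aV h v) = ((h \<otimes> g) <# I (fV v), fV v)"
    using phV_char[OF hv(1) m_closed[OF h g(1)]] hv by simp
  have "I (fV v) \<subseteq> carrier G" unfolding I_def by blast
  then have "h <# (g <# I (fV v)) = (h \<otimes> g) <# I (fV v)" using lcos_m_assoc g h by blast
  then show ?thesis using 1 phV_char[OF v g] unfolding derived_actV_def by simp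
qed

lemma equivE: assumes h: "h \<in> carrier G" and y: "y \<in> gedges Y"
  shows "phE (aE h y) = derived_actE G h (phE y)"
proof -
  obtain g where g: "g \<in> carrier G" "aE g (L (fE y)) = y" using phE_ex y by blast
  have hy: "aE h y \<in> gedges Y" "fE (aE h y) = fE y" using aE_in fE_inv h y by auto
  have e: "fE y \<in> gedges B" using fE_in y by blast
  have Li: "L (fE y) \<in> gedges Y" using L[OF e] by blast
  have "aE (h \<otimes> g) (L (fE (aE h y))) = aE h y" using hy(2) g(2) aE_mult[OF h g(1) Li] by simp
  then have "phE (aE h y) = (h \<otimes> g, fE y)" using phE_char[OF hy(1) m_closed[OF h g(1)]] hy by simp
  then show ?thesis using phE_char[OF y g] unfolding derived_actE_def by simp
qed

end

theorem proposition2p11: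
  fixes G :: "('g, 'm) monoid_scheme"
    and Y :: "('v, 'e) graph" and B :: "('w, 'd) graph"
  assumes "group G" and "finite (carrier G)"
    and "finite_graph Y" and "finite_graph B"
    and "covering G Y B aV aE fV fE"
  shows "\<exists>(\<alpha> :: 'd \<Rightarrow> 'g) (I :: 'w \<Rightarrow> 'g set) \<phi>V \<phi>E.
           (\<forall>e\<in>gedges B. \<alpha> e \<in> carrier G \<and> \<alpha> (grev B e) = inv\<^bsub>G\<^esub> (\<alpha> e)) \<and>
           (\<forall>v\<in>gverts B. subgroup (I v) G) \<and>
           graph_iso Y (derived_graph G B \<alpha> I) \<phi>V \<phi>E \<and>
           (\<forall>g\<in>carrier G. (\<forall>v\<in>gverts Y. \<phi>V (aV g v) = derived_actV G g (\<phi>V v)) \<and>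
                          (\<forall>e\<in>gedges Y. \<phi>E (aE g e) = derived_actE G g (\<phi>E e))) \<and>
           (\<forall>v\<in>gverts Y. snd (\<phi>V v) = fV v) \<and>
           (\<forall>e\<in>gedges Y. snd (\<phi>E e) = fE e)"
proof -
  interpret cov G Y B aV aE fV fE
    using assms unfolding cov_def cov_axioms_def finite_graph_def by blast
  show ?thesis
  proof (intro exI conjI)
    show "\<forall>e\<in>gedges B. al e \<in> carrier G \<and> al (grev B e) = inv\<^bsub>G\<^esub> (al e)"
      using al by blast
    show "\<forall>v\<in>gverts B. subgroup (I v) G" using I_sub by blast
    show "graph_iso Y (derived_graph G B al I) phV phE"
      unfolding graph_iso_def using hom_D bijV bijE by blast
    show "\<forall>g\<in>carrier G. (\<forall>v\<in>gverts Y. phV (aV g v) = derived_actV G g (phV v)) \<and>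
                          (\<forall>e\<in>gedges Y. phE (aE g e) = derived_actE G g (phE e))"
      using equivV equivE by blast
    show "\<forall>v\<in>gverts Y. snd (phV v) = fV v" by (simp add: phV_def)
    show "\<forall>e\<in>gedges Y. snd (phE e) = fE e" by (simp add: phE_def)
  qed
qed

end
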